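(* Let $d\ge1$, $N=2^d$, $Q\ge 1$, and let $\Omega=\{(x,y,m):0\le x\le 1,\ 0<m\le y\le Qm\}$. Say a function $B:\Omega\to\mathbb{R}$ satisfies the main inequality at level $m$ if \[ B(x,y,m)\ge \frac1N\sum_{i=1}^N B(x_i,y_i,m_i) \] whenever $(x,y,m)\in\Omega$, $(x_i,y_i,m_i)\in\Omega$ for $i=1,\dots,N$, $\frac1N\sum x_i=x$, $\frac1N\sum y_i=y$ and $\min_i m_i=m$. Suppose $B$ satisfies the main inequality at level $m=1$ and the homogeneity property $B(x,\lambda y,\lambda m)=\lambda B(x,y,m)$ for all $\lambda>0$ and $(x,y,m)\in\Omega$. Then $B$ satisfies the main inequality at every level $m>0$. *)

theory Defs
  imports Complex_Main
begin

definition Omega :: "real \<Rightarrow> (real \<times> real \<times> real) set" where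
  "Omega Q = {(x, y, m). 0 \<le> x \<and> x \<le> 1 \<and> 0 < m \<and> m \<le> y \<and> y \<le> Q * m}"

definition main_ineq_at ::
  "nat \<Rightarrow> real \<Rightarrow> (real \<Rightarrow> real \<Rightarrow> real \<Rightarrow> real) \<Rightarrow> real \<Rightarrow> bool" where
  "main_ineq_at d Q B m \<longleftrightarrow>
     (\<forall>x y (xs :: nat \<Rightarrow> real) (ys :: nat \<Rightarrow> real) (ms :: nat \<Rightarrow> real).
        (x, y, m) \<in> Omega Q \<and>
        (\<forall>i < 2 ^ d. (xs i, ys i, ms i) \<in> Omega Q) \<and>
        (\<Sum>i<2 ^ d. xs i) / 2 ^ d = x \<and>
        (\<Sum>i<2 ^ d. ys i) / 2 ^ d = y \<and>
        (MIN i\<in>{..<2 ^ d}. ms i) = m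
        \<longrightarrow> B x y m \<ge> (\<Sum>i<2 ^ d. B (xs i) (ys i) (ms i)) / 2 ^ d)"

end

theory Submission
  imports Defs
begin

theorem mainTheorem3:
  fixes d :: nat and Q :: real and B :: "real \<Rightarrow> real \<Rightarrow> real \<Rightarrow> real"
  assumes "d \<ge> 1" and "Q \<ge> 1"
    and "main_ineq_at d Q B 1"
    and "\<And>l x y m. l > 0 \<Longrightarrow> (x, y, m) \<in> Omega Q \<Longrightarrow>
           B x (l * y) (l * m) = l * B x y m"
  shows "\<forall>m > 0. main_ineq_at d Q B m"
proof (intro allI impI)
  fix m :: real assume m: "m > 0"
  have hom: "B x (l * y) (l * m) = l * B x y m" if "l > 0" "(x, y, m) \<in> Omega Q" for l x y m
    using assms(4) that by blast
  have omsc: "(x, y / c, mm / c) \<in> Omega Q" if "(x, y, mm) \<in> Omega Q" "c > 0" for x y mm c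
    using that by (auto simp: Omega_def divide_right_mono field_simps)
  show "main_ineq_at d Q B m"
    unfolding main_ineq_at_def
  proof (intro allI impI, elim conjE)
    fix x y and xs ys ms :: "nat \<Rightarrow> real"
    assume xO: "(x, y, m) \<in> Omega Q" and iO: "\<forall>i<2 ^ d. (xs i, ys i, ms i) \<in> Omega Q"
      and sx: "(\<Sum>i<2 ^ d. xs i) / 2 ^ d = x" and sy: "(\<Sum>i<2 ^ d. ys i) / 2 ^ d = y"
      and mn: "(MIN i\<in>{..<2 ^ d}. ms i) = m"
    define ys' where "ys' i = ys i / m" for i
    define ms' where "ms' i = ms i / m" for i
    have "(\<lambda>t. t / m) (MIN i\<in>{..<2 ^ d}. ms i) = (MIN i\<in>{..<(2::nat) ^ d}. ms i / m)"
    proof -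
      have ne: "{..<(2::nat) ^ d} \<noteq> {}" by (metis lessThan_iff empty_iff zero_less_numeral zero_less_power)
      have "mono (\<lambda>t::real. t / m)" using m by (auto simp: mono_def intro: divide_right_mono)
      from mono_Min_commute[OF this, of "ms ` {..<2 ^ d}"] ne show ?thesis
        by (simp add: image_image)
    qed
    hence mn': "(MIN i\<in>{..<2 ^ d}. ms' i) = 1" using mn m by (simp add: ms'_def)
    have sy': "(\<Sum>i<2 ^ d. ys' i) / 2 ^ d = y / m"
      using sy by (simp add: ys'_def sum_divide_distrib[symmetric] field_simps)
    have O1: "(x, y / m, 1) \<in> Omega Q" using omsc[OF xO m] m by simp
    have iO': "\<forall>i<2 ^ d. (xs i, ys' i, ms' i) \<in> Omega Q"
      using iO omsc m by (simp add: ys'_def ms'_def)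
    have le: "B x (y/m) 1 \<ge> (\<Sum>i<2 ^ d. B (xs i) (ys' i) (ms' i)) / 2 ^ d"
      using assms(3)[unfolded main_ineq_at_def, rule_format, of x "y/m" xs ys' ms']
        O1 iO' sx sy' mn' by blast
    have e1: "B x y m = m * B x (y/m) 1" using hom[OF m O1] m by simp
    have e2: "B (xs i) (ys i) (ms i) = m * B (xs i) (ys' i) (ms' i)" if "i < 2^d" for i
      using hom[OF m, of "xs i" "ys' i" "ms' i"] iO' that m by (simp add: ys'_def ms'_def)
    have "(\<Sum>i<2 ^ d. B (xs i) (ys i) (ms i)) / 2 ^ d
        = m * ((\<Sum>i<2 ^ d. B (xs i) (ys' i) (ms' i)) / 2 ^ d)"
      by (simp add: e2 sum_distrib_left[symmetric])
    also have "\<dots> \<le> m * B x (y/m) 1" using mult_left_mono[OF le] m by simp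
    finally show "B x y m \<ge> (\<Sum>i<2 ^ d. B (xs i) (ys i) (ms i)) / 2 ^ d" using e1 by simp
  qed
qed

end
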